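(* For every integer $n \ge 9$ of the form $n = 5k + 4$ with $k$ a positive integer, we have $\mathbf{max\mbox{-}diam}(n, 2) \ge 4^{(n - 4)/5}$.
   Context: A partial DFA is a triple $\mathcal{A} = (Q, \Sigma, \delta)$ with $Q$ a finite set of states, $\Sigma$ a finite alphabet, and $\delta \colon Q \times \Sigma \rightharpoonup Q$ a partial transition function, extended to words in the usual way. Each word $w \in \Sigma^*$ expresses the partial transformation $q \mapsto \delta(q, w)$ of $Q$ (undefined where $\delta(q,w)$ is undefined). The depth of a partial transformation $f$ expressed by some word is the length of a shortest word expressing $f$. The diameter of $\mathcal{A}$ is the maximum depth over all partial transformations of $Q$ expressed by some word in $\mathcal{A}$ (equivalently, the smallest $\ell \ge 0$ such that every transformation expressed by a word is expressed by a word of length at most $\ell$). $\mathbf{max\mbox{-}diam}(n, m)$ denotes the maximum diameter over all partial DFAs with $n$ states and $m$ letters. *)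

theory Defs
  imports Complex_Main
begin

text \<open>A partial DFA with n states and m letters: states are 0..<n, letters 0..<m,
  and the partial transition function is delta :: state => letter => state option.\<close>

type_synonym pdfa = "nat \<Rightarrow> nat \<Rightarrow> nat option"

definition wf_pdfa :: "nat \<Rightarrow> nat \<Rightarrow> pdfa \<Rightarrow> bool" where
  "wf_pdfa n m \<delta> \<longleftrightarrow>
     (\<forall>q a. (q < n \<and> a < m \<longrightarrow> (\<forall>p. \<delta> q a = Some p \<longrightarrow> p < n))
          \<and> (\<not> (q < n \<and> a < m) \<longrightarrow> \<delta> q a = None))"

fun delta_word :: "pdfa \<Rightarrow> nat \<Rightarrow> nat list \<Rightarrow> nat option" where
  "delta_word \<delta> q [] = Some q"
| "delta_word \<delta> q (a # w) = (case \<delta> q a of None \<Rightarrow> None | Some p \<Rightarrow> delta_word \<delta> p w)"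

definition expressed :: "nat \<Rightarrow> pdfa \<Rightarrow> nat list \<Rightarrow> (nat \<Rightarrow> nat option)" where
  "expressed n \<delta> w = (\<lambda>q. if q < n then delta_word \<delta> q w else None)"

definition words :: "nat \<Rightarrow> nat list set" where
  "words m = {w. set w \<subseteq> {..<m}}"

definition transformations :: "nat \<Rightarrow> nat \<Rightarrow> pdfa \<Rightarrow> (nat \<Rightarrow> nat option) set" where
  "transformations n m \<delta> = expressed n \<delta> ` words m"

definition depth :: "nat \<Rightarrow> nat \<Rightarrow> pdfa \<Rightarrow> (nat \<Rightarrow> nat option) \<Rightarrow> nat" where
  "depth n m \<delta> f = (LEAST l. \<exists>w \<in> words m. length w = l \<and> expressed n \<delta> w = f)"

definition diameter :: "nat \<Rightarrow> nat \<Rightarrow> pdfa \<Rightarrow> nat" where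
  "diameter n m \<delta> = Max (depth n m \<delta> ` transformations n m \<delta>)"

definition max_diam :: "nat \<Rightarrow> nat \<Rightarrow> nat" where
  "max_diam n m = Max {diameter n m \<delta> | \<delta>. wf_pdfa n m \<delta>}"

end

theory Submission
  imports Defs
begin


lemma finite_maps_sub:
  assumes "finite A" "finite B"
  shows "finite {m. dom m \<subseteq> A \<and> ran m \<subseteq> B}"
proof -
  have "{m. dom m \<subseteq> A \<and> ran m \<subseteq> B} = (\<Union>A'\<in>Pow A. {m. dom m = A' \<and> ran m \<subseteq> B})"
    by auto
  moreover have "finite (\<Union>A'\<in>Pow A. {m. dom m = A' \<and> ran m \<subseteq> B})"
    using assms by (auto intro!: finite_set_of_finite_maps dest: finite_subset)
  ultimately show ?thesis by simp
qed

lemma dw_bound: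
  assumes "wf_pdfa n m \<delta>" "q < n" "delta_word \<delta> q w = Some p"
  shows "p < n"
  using assms(2,3)
proof (induction w arbitrary: q)
  case Nil then show ?case by simp
next
  case (Cons a w)
  then obtain r where r: "\<delta> q a = Some r" "delta_word \<delta> r w = Some p"
    by (auto split: option.splits)
  have "r < n" using assms(1) r(1) Cons.prems(1) unfolding wf_pdfa_def
    by (metis option.distinct(1))
  then show ?case using Cons.IH r(2) by blast
qed

lemma finite_trans:
  assumes "wf_pdfa n m \<delta>"
  shows "finite (transformations n m \<delta>)"
proof -
  have "transformations n m \<delta> \<subseteq> {g. dom g \<subseteq> {..<n} \<and> ran g \<subseteq> {..<n}}"
  proof
    fix g assume "g \<in> transformations n m \<delta>"
    then obtain w where g: "g = expressed n \<delta> w" unfolding transformations_def by auto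
    have "dom g \<subseteq> {..<n}" unfolding g expressed_def dom_def by auto
    moreover have "ran g \<subseteq> {..<n}"
    proof
      fix p assume "p \<in> ran g"
      then obtain q where "g q = Some p" unfolding ran_def by auto
      then have "q < n" "delta_word \<delta> q w = Some p" unfolding g expressed_def
        by (auto split: if_splits)
      then show "p \<in> {..<n}" using dw_bound[OF assms] by auto
    qed
    ultimately show "g \<in> {g. dom g \<subseteq> {..<n} \<and> ran g \<subseteq> {..<n}}" by simp
  qed
  then show ?thesis using finite_maps_sub[of "{..<n}" "{..<n}"] finite_subset by blast
qed

lemma finite_wf: "finite {\<delta>. wf_pdfa n m \<delta>}"
proof -
  let ?G = "{g :: nat \<times> nat \<Rightarrow> nat option. dom g \<subseteq> {..<n} \<times> {..<m} \<and> ran g \<subseteq> {..<n}}"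
  have "{\<delta>. wf_pdfa n m \<delta>} \<subseteq> (\<lambda>g q x. g (q, x)) ` ?G"
  proof
    fix \<delta> assume "\<delta> \<in> {\<delta>. wf_pdfa n m \<delta>}"
    then have wf: "wf_pdfa n m \<delta>" by simp
    define g where "g = (\<lambda>(q, x). \<delta> q x)"
    have "dom g \<subseteq> {..<n} \<times> {..<m}"
    proof
      fix z assume "z \<in> dom g"
      then obtain q x where z: "z = (q, x)" "\<delta> q x \<noteq> None" by (cases z) (simp add: dom_def g_def)
      have "q < n \<and> x < m" proof (rule ccontr)
        assume "\<not> (q < n \<and> x < m)"
        moreover have "\<forall>q a. \<not> (q < n \<and> a < m) \<longrightarrow> \<delta> q a = None" using wf unfolding wf_pdfa_def by simp
        ultimately have "\<delta> q x = None" by simp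
        then show False using z(2) by simp
      qed
      then show "z \<in> {..<n} \<times> {..<m}" using z by simp
    qed
    moreover have "ran g \<subseteq> {..<n}"
    proof
      fix p assume "p \<in> ran g"
      then obtain q x where qx: "\<delta> q x = Some p" unfolding ran_def g_def by auto
      have h: "\<forall>q a. \<not> (q < n \<and> a < m) \<longrightarrow> \<delta> q a = None" using wf unfolding wf_pdfa_def by simp
      have h2: "\<forall>q a. (q < n \<and> a < m) \<longrightarrow> (\<forall>p. \<delta> q a = Some p \<longrightarrow> p < n)" using wf unfolding wf_pdfa_def by simp
      have "q < n \<and> x < m"
      proof (rule ccontr)
        assume "\<not> (q < n \<and> x < m)"
        then have "\<delta> q x = None" using h by simp
        then show False using qx by simp
      qed
      then show "p \<in> {..<n}" using h2 qx by simp
    qed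
    ultimately have gG: "g \<in> ?G" by simp
    have e: "\<delta> = (\<lambda>g q x. g (q, x)) g" by (rule ext, rule ext) (simp add: g_def)
    show "\<delta> \<in> (\<lambda>g q x. g (q, x)) ` ?G" by (rule image_eqI[where f="\<lambda>g q x. g (q, x)", OF e gG])
  qed
  moreover have "finite ?G" by (rule finite_maps_sub) simp_all
  then have "finite ((\<lambda>g q x. g (q, x)) ` ?G)" by (rule finite_imageI)
  ultimately show ?thesis by (rule finite_subset)
qed

lemma framework:
  assumes wf: "wf_pdfa n 2 \<delta>" and W: "W \<in> words 2"
    and lb: "\<And>w. w \<in> words 2 \<Longrightarrow> expressed n \<delta> w = expressed n \<delta> W \<Longrightarrow> B \<le> length w"
  shows "B \<le> max_diam n 2"
proof -
  let ?f = "expressed n \<delta> W"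
  let ?P = "\<lambda>l. \<exists>w \<in> words 2. length w = l \<and> expressed n \<delta> w = ?f"
  have "?P (length W)" using W by auto
  then have "?P (Least ?P)" by (rule LeastI)
  then obtain w0 where "w0 \<in> words 2" "length w0 = Least ?P" "expressed n \<delta> w0 = ?f" by blast
  then have d: "B \<le> depth n 2 \<delta> ?f" unfolding depth_def using lb[of w0] by simp
  have ft: "?f \<in> transformations n 2 \<delta>" using W unfolding transformations_def by auto
  have "depth n 2 \<delta> ?f \<le> diameter n 2 \<delta>" unfolding diameter_def
    using finite_trans[OF wf] ft by (intro Max_ge) auto
  moreover have "diameter n 2 \<delta> \<le> max_diam n 2" unfolding max_diam_def
  proof (rule Max_ge)
    have "{diameter n 2 \<delta> | \<delta>. wf_pdfa n 2 \<delta>} = diameter n 2 ` {\<delta>. wf_pdfa n 2 \<delta>}" by auto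
    then show "finite {diameter n 2 \<delta> | \<delta>. wf_pdfa n 2 \<delta>}" using finite_wf by simp
    show "diameter n 2 \<delta> \<in> {diameter n 2 \<delta> | \<delta>. wf_pdfa n 2 \<delta>}" using wf by auto
  qed
  ultimately show ?thesis using d by linarith
qed




definition Dm :: "nat \<Rightarrow> nat \<Rightarrow> nat \<Rightarrow> nat option" where
"Dm L q x = (if x = 0 then (if q < 4*L then Some (4 * ((q div 4 + 1) mod L) + q mod 4)
                             else if q = 4*L then Some (4*L+1) else None)
  else if x = 1 then (if q < 3 then Some (q+1) else if q = 3 then Some (4*L)
                      else if q < 8 then None else if q < 4*L then Some q
                      else if q = 4*L+1 then Some 4 else None)
  else None)"

lemma dw_app: "delta_word \<delta> q u = Some p \<Longrightarrow> delta_word \<delta> q (u @ v) = delta_word \<delta> p v"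
  by (induction u arbitrary: q) (auto split: option.splits)

lemma Dm_a: "q < 4*L \<Longrightarrow> Dm L q 0 = Some (4 * ((q div 4 + 1) mod L) + q mod 4)"
  by (simp add: Dm_def)

lemma Dm_b_low: "v < 3 \<Longrightarrow> Dm L v 1 = Some (v+1)"
  by (simp add: Dm_def)
lemma Dm_b_3: "Dm L 3 1 = Some (4*L)"
  by (simp add: Dm_def)
lemma Dm_a_M: "Dm L (4*L) 0 = Some (4*L+1)"
  by (simp add: Dm_def)
lemma Dm_b_M: "L \<ge> 3 \<Longrightarrow> Dm L (4*L+1) 1 = Some 4"
  by (simp add: Dm_def)
lemma Dm_b_id: "8 \<le> q \<Longrightarrow> q < 4*L \<Longrightarrow> Dm L q 1 = Some q"
  by (simp add: Dm_def)

lemma cell_lt: "0 < L \<Longrightarrow> 4 * (c mod L) + v < 4 * L" if "v < 4" for c v L :: nat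
proof -
  assume "0 < L"
  then have "c mod L < L" by simp
  then have "c mod L + 1 \<le> L" by simp
  then show ?thesis using that by linarith
qed

lemma AP: "0 < L \<Longrightarrow> q < 4*L \<Longrightarrow>
  delta_word (Dm L) q (replicate m 0) = Some (4 * ((q div 4 + m) mod L) + q mod 4)"
proof (induction m arbitrary: q)
  case 0
  then have "q div 4 < L" by simp
  then show ?case by simp
next
  case (Suc m)
  define q1 where "q1 = 4 * ((q div 4 + 1) mod L) + q mod 4"
  have q1: "Dm L q 0 = Some q1" using Suc.prems Dm_a q1_def by simp
  have "q1 < 4*L" unfolding q1_def using Suc.prems by (intro cell_lt) auto
  have d: "q1 div 4 = (q div 4 + 1) mod L" "q1 mod 4 = q mod 4" unfolding q1_def by auto
  have "delta_word (Dm L) q (replicate (Suc m) 0) = delta_word (Dm L) q1 (replicate m 0)"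
    using q1 by simp
  also have "\<dots> = Some (4 * ((q1 div 4 + m) mod L) + q1 mod 4)" using Suc.IH[OF Suc.prems(1) \<open>q1 < 4*L\<close>] .
  also have "(q1 div 4 + m) mod L = (q div 4 + Suc m) mod L" unfolding d by (simp add: mod_add_left_eq)
  finally show ?case using d by simp
qed

definition ba :: "nat \<Rightarrow> nat list" where "ba t = concat (replicate t [1,0])"

lemma ba_Suc: "ba (Suc t) = [1,0] @ ba t" by (simp add: ba_def)
lemma ba_add: "ba (a + b) = ba a @ ba b" by (simp add: ba_def replicate_add)

lemma BA: "2 \<le> c \<Longrightarrow> c < L \<Longrightarrow> c + t \<le> L \<Longrightarrow> v \<le> 3 \<Longrightarrow>
  delta_word (Dm L) (4*c+v) (ba t) = Some (4 * ((c+t) mod L) + v)"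
proof (induction t arbitrary: c)
  case 0
  then show ?case by (simp add: ba_def)
next
  case (Suc t)
  have b: "Dm L (4*c+v) 1 = Some (4*c+v)" using Suc.prems by (intro Dm_b_id) auto
  have a: "Dm L (4*c+v) 0 = Some (4 * ((c+1) mod L) + v)"
    using Suc.prems by (subst Dm_a) auto
  show ?case
  proof (cases "c + 1 < L")
    case True
    have "delta_word (Dm L) (4*c+v) (ba (Suc t)) = delta_word (Dm L) (4*(c+1)+v) (ba t)"
      using a b True by (simp add: ba_Suc)
    also have "\<dots> = Some (4 * ((c+1+t) mod L) + v)" using Suc.prems True by (intro Suc.IH) auto
    finally show ?thesis by simp
  next
    case False
    then have "t = 0" "c + 1 = L" using Suc.prems by auto
    then show ?thesis using a b by (simp add: ba_Suc ba_def)
  qed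
qed


definition Gw :: "nat \<Rightarrow> nat \<Rightarrow> nat list" where
  "Gw L i = ba i @ [1] @ replicate (L - i) 0"

lemma G_gt:
  assumes L: "L = k + 1" and ij: "i < j" "j < k" and v: "v \<le> 3"
  shows "delta_word (Dm L) (4*(L-j)+v) (Gw L i) = Some (4*(L-j)+v)"
proof -
  have 1: "delta_word (Dm L) (4*(L-j)+v) (ba i) = Some (4 * ((L-j+i) mod L) + v)"
    using assms by (intro BA) auto
  have m: "(L-j+i) mod L = L-j+i" using assms by auto
  have 2: "Dm L (4*(L-j+i)+v) 1 = Some (4*(L-j+i)+v)" using assms by (intro Dm_b_id) auto
  have 3: "delta_word (Dm L) (4*(L-j+i)+v) (replicate (L-i) 0) = Some (4 * (((L-j+i) + (L-i)) mod L) + v)"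
    using assms by (subst AP) auto
  have e: "(L-j+i) + (L-i) = (L - j) + L" using assms by simp
  have "((L-j+i) + (L-i)) mod L = ((L - j) + L) mod L" by (simp only: e)
  also have "\<dots> = (L - j) mod L" by simp
  also have "\<dots> = L - j" using assms by simp
  finally have m2: "((L-j+i) + (L-i)) mod L = L - j" .
  show ?thesis unfolding Gw_def
    using dw_app[OF 1[unfolded m]] 2 3 m2 by simp
qed


lemma reach0:
  assumes L: "L = k + 1" and j: "j < k" and v: "v \<le> 3"
  shows "delta_word (Dm L) (4*((L-j) mod L)+v) (ba j) = Some v"
proof (cases "j = 0")
  case True then show ?thesis by (simp add: ba_def)
next
  case False
  have "delta_word (Dm L) (4*(L-j)+v) (ba j) = Some (4 * ((L-j+j) mod L) + v)"
    using assms False by (intro BA) auto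
  moreover have "(L-j) mod L = L - j" using assms False by simp
  moreover have "L - j + j = L" using assms by simp
  ultimately show ?thesis by simp
qed

lemma G_eq:
  assumes L: "L = k + 1" and i: "i < k" and v: "v \<le> 2"
  shows "delta_word (Dm L) (4*((L-i) mod L)+v) (Gw L i) = Some (4*((L-i) mod L)+(v+1))"
proof -
  have 1: "delta_word (Dm L) (4*((L-i) mod L)+v) (ba i) = Some v" using i v by (intro reach0[OF L]) auto
  have 2: "Dm L v 1 = Some (v+1)" using v by (intro Dm_b_low) auto
  have 3: "delta_word (Dm L) (v+1) (replicate (L-i) 0) = Some (4 * (((v+1) div 4 + (L-i)) mod L) + (v+1) mod 4)"
    using assms by (intro AP) auto
  have 4: "(v+1) div 4 = 0" "(v+1) mod 4 = v+1" using v by auto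
  show ?thesis unfolding Gw_def using dw_app[OF 1] 2 3 4 by simp
qed

lemma G_lt:
  assumes L: "L = k + 1" and ij: "j < i" "i < k"
  shows "delta_word (Dm L) (4*((L-j) mod L)+3) (Gw L i) = Some (4*((L-j) mod L))"
proof -
  have 1: "delta_word (Dm L) (4*((L-j) mod L)+3) (ba j) = Some 3" using ij by (intro reach0[OF L]) auto
  have bi: "ba i = ba j @ [1,0] @ ba (i-j-1)"
  proof -
    have "i = j + Suc (i-j-1)" using ij by simp
    then have "ba i = ba (j + Suc (i-j-1))" by simp
    then show ?thesis by (simp only: ba_add ba_Suc)
  qed
  have s1: "Dm L 3 1 = Some (4*L)" by (rule Dm_b_3)
  have s2: "Dm L (4*L) 0 = Some (4*L+1)" by (rule Dm_a_M)
  have s3: "Dm L (4*L+1) 1 = Some 4" using L ij by (intro Dm_b_M) auto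
  have rest: "delta_word (Dm L) (4*L+1) (ba (i-j-1) @ [1] @ replicate (L-i) 0) = Some (4*((L-j) mod L))"
  proof (cases "i - j - 1")
    case 0
    then have ij1: "i = j + 1" using ij by simp
    have "delta_word (Dm L) 4 (replicate (L-i) 0) = Some (4 * ((4 div 4 + (L-i)) mod L) + 4 mod 4)"
      using assms by (intro AP) auto
    moreover have "4 div 4 + (L-i) = L - j" using ij1 assms by simp
    ultimately show ?thesis using s3 0 by (simp add: ba_def)
  next
    case (Suc t)
    have a4: "Dm L 4 0 = Some 8"
    proof -
      have "Dm L 4 0 = Some (4 * ((4 div 4 + 1) mod L) + 4 mod 4)" using assms by (intro Dm_a) auto
      moreover have "(4 div 4 + 1) mod L = (2::nat)" using assms by simp
      ultimately show ?thesis by simp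
    qed
    have b2: "delta_word (Dm L) (4*2+0) (ba t) = Some (4 * ((2+t) mod L) + 0)"
      using assms Suc by (intro BA) auto
    have m: "(2+t) mod L = i - j" using assms Suc by simp
    have b3: "Dm L (4*(i-j)) 1 = Some (4*(i-j))" using assms Suc by (intro Dm_b_id) auto
    have b4: "delta_word (Dm L) (4*(i-j)) (replicate (L-i) 0) = Some (4 * ((4*(i-j) div 4 + (L-i)) mod L) + 4*(i-j) mod 4)"
      using assms by (intro AP) auto
    have m2: "4*(i-j) div 4 + (L-i) = L - j" using assms by simp
    have "delta_word (Dm L) (4*L+1) (ba (i-j-1) @ [1] @ replicate (L-i) 0)
        = delta_word (Dm L) 8 (ba t @ [1] @ replicate (L-i) 0)"
      using Suc s3 a4 by (simp add: ba_Suc)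
    also have "\<dots> = delta_word (Dm L) (4*(i-j)) ([1] @ replicate (L-i) 0)"
      using dw_app[OF b2[unfolded m]] by simp
    also have "\<dots> = Some (4*((L-j) mod L))" using b3 b4 m2 by simp
    finally show ?thesis .
  qed
  show ?thesis unfolding Gw_def bi using dw_app[OF 1] s1 s2 rest by simp
qed


definition tok :: "nat \<Rightarrow> (nat \<Rightarrow> nat) \<Rightarrow> nat \<Rightarrow> nat" where
  "tok L d j = 4*((L-j) mod L) + d j"

lemma G_conf:
  assumes L: "L = k + 1" and i: "i < k" and d: "\<forall>j. d j \<le> 3" "\<forall>j<i. d j = 3" "d i \<le> 2"
  shows "\<forall>j<k. delta_word (Dm L) (tok L d j) (Gw L i)
     = Some (tok L (\<lambda>j. if j < i then 0 else if j = i then d i + 1 else d j) j)"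
proof (intro allI impI)
  fix j assume j: "j < k"
  consider "j < i" | "j = i" | "i < j" by linarith
  then show "delta_word (Dm L) (tok L d j) (Gw L i)
     = Some (tok L (\<lambda>j. if j < i then 0 else if j = i then d i + 1 else d j) j)"
  proof cases
    case 1
    then show ?thesis using G_lt[OF L 1 i] d unfolding tok_def by simp
  next
    case 2
    then show ?thesis using G_eq[OF L i d(3)] d unfolding tok_def by simp
  next
    case 3
    have "(L-j) mod L = L - j" using 3 L j by simp
    then show ?thesis using G_gt[OF L 3 j, of "d j"] d 3 unfolding tok_def by simp
  qed
qed

fun Fw :: "nat \<Rightarrow> nat \<Rightarrow> nat list" where
  "Fw L 0 = []"
| "Fw L (Suc i) = (Fw L i @ Gw L i) @ (Fw L i @ Gw L i) @ (Fw L i @ Gw L i) @ Fw L i"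

lemma chain:
  assumes "\<forall>j<k. delta_word D (tok L d j) u = Some (tok L d' j)"
    and "\<forall>j<k. delta_word D (tok L d' j) v = Some (tok L d'' j)"
  shows "\<forall>j<k. delta_word D (tok L d j) (u @ v) = Some (tok L d'' j)"
proof (intro allI impI)
  fix j assume "j < k"
  then have "delta_word D (tok L d j) u = Some (tok L d' j)" "delta_word D (tok L d' j) v = Some (tok L d'' j)"
    using assms by auto
  then show "delta_word D (tok L d j) (u @ v) = Some (tok L d'' j)" using dw_app by metis
qed

lemma round:
  assumes L: "L = k + 1" and i: "i < k" and d: "\<forall>j. d j \<le> 3" "\<forall>j<i. d j = 0" "d i \<le> 2"
    and FI: "\<And>d. \<forall>j. d j \<le> 3 \<Longrightarrow> \<forall>j<i. d j = 0 \<Longrightarrow>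
       \<forall>j<k. delta_word (Dm L) (tok L d j) (Fw L i) = Some (tok L (\<lambda>j. if j < i then 3 else d j) j)"
  shows "\<forall>j<k. delta_word (Dm L) (tok L d j) (Fw L i @ Gw L i) = Some (tok L (d(i := d i + 1)) j)"
proof -
  define d1 where "d1 = (\<lambda>j. if j < i then 3 else d j)"
  have s1: "\<forall>j<k. delta_word (Dm L) (tok L d j) (Fw L i) = Some (tok L d1 j)"
    using FI[OF d(1,2)] unfolding d1_def .
  have s2: "\<forall>j<k. delta_word (Dm L) (tok L d1 j) (Gw L i)
     = Some (tok L (\<lambda>j. if j < i then 0 else if j = i then d1 i + 1 else d1 j) j)"
    using d by (intro G_conf[OF L i]) (auto simp: d1_def)
  have e: "(\<lambda>j. if j < i then 0 else if j = i then d1 i + 1 else d1 j) = d(i := d i + 1)"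
    using d by (auto simp: d1_def)
  show ?thesis using chain[OF s1 s2[unfolded e]] .
qed

lemma F_conf:
  assumes L: "L = k + 1"
  shows "i \<le> k \<Longrightarrow> \<forall>j. d j \<le> 3 \<Longrightarrow> \<forall>j<i. d j = 0 \<Longrightarrow>
    \<forall>j<k. delta_word (Dm L) (tok L d j) (Fw L i) = Some (tok L (\<lambda>j. if j < i then 3 else d j) j)"
proof (induction i arbitrary: d)
  case 0
  then show ?case by simp
next
  case (Suc i)
  have i: "i < k" using Suc.prems by simp
  have FI: "\<And>d. \<forall>j. d j \<le> 3 \<Longrightarrow> \<forall>j<i. d j = 0 \<Longrightarrow>
       \<forall>j<k. delta_word (Dm L) (tok L d j) (Fw L i) = Some (tok L (\<lambda>j. if j < i then 3 else d j) j)"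
    using Suc.IH i by simp
  have di: "d i = 0" using Suc.prems by simp
  have d3: "\<forall>j. d j \<le> 3" and d0: "\<forall>j<i. d j = 0" using Suc.prems by auto
  have a1: "\<forall>j. (d(i := 1)) j \<le> 3" "\<forall>j<i. (d(i := 1)) j = 0" "(d(i := 1)) i \<le> 2" using d3 d0 by auto
  have a2: "\<forall>j. (d(i := 2)) j \<le> 3" "\<forall>j<i. (d(i := 2)) j = 0" "(d(i := 2)) i \<le> 2" using d3 d0 by auto
  have a3: "\<forall>j. (d(i := 3)) j \<le> 3" "\<forall>j<i. (d(i := 3)) j = 0" using d3 d0 by auto
  have u1: "d(i := d i + 1) = d(i := 1)" using di by simp
  have u2: "(d(i := 1))(i := (d(i := 1)) i + 1) = d(i := 2)" by (rule ext) simp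
  have u3: "(d(i := 2))(i := (d(i := 2)) i + 1) = d(i := 3)" by (rule ext) simp
  have r1: "\<forall>j<k. delta_word (Dm L) (tok L d j) (Fw L i @ Gw L i) = Some (tok L (d(i := 1)) j)"
  proof -
    have "d i \<le> 2" using di by simp
    from round[OF L i d3 d0 this FI] show ?thesis unfolding u1 .
  qed
  have r2: "\<forall>j<k. delta_word (Dm L) (tok L (d(i := 1)) j) (Fw L i @ Gw L i) = Some (tok L (d(i := 2)) j)"
    using round[OF L i a1 FI] unfolding u2 .
  have r3: "\<forall>j<k. delta_word (Dm L) (tok L (d(i := 2)) j) (Fw L i @ Gw L i) = Some (tok L (d(i := 3)) j)"
    using round[OF L i a2 FI] unfolding u3 .
  have r4: "\<forall>j<k. delta_word (Dm L) (tok L (d(i := 3)) j) (Fw L i) = Some (tok L (\<lambda>j. if j < i then 3 else (d(i := 3)) j) j)"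
    using FI[OF a3] .
  have e: "(\<lambda>j. if j < i then 3 else (d(i := 3)) j) = (\<lambda>j. if j < Suc i then 3 else d j)"
    by (rule ext) (simp add: less_Suc_eq)
  have "\<forall>j<k. delta_word (Dm L) (tok L d j) ((Fw L i @ Gw L i) @ (Fw L i @ Gw L i) @ (Fw L i @ Gw L i) @ Fw L i)
     = Some (tok L (\<lambda>j. if j < Suc i then 3 else d j) j)"
    by (rule chain[OF r1 chain[OF r2 chain[OF r3 r4[unfolded e]]]])
  then show ?case by (simp only: Fw.simps)
qed




lemma key_sum:
  fixes f g :: "nat \<Rightarrow> nat"
  assumes r: "\<rho> \<le> k" and o: "\<forall>j<k. j \<noteq> \<rho> \<and> Suc j \<noteq> \<rho> \<longrightarrow> g j = f j"
    and h: "\<rho> < k \<longrightarrow> g \<rho> = Suc (f \<rho>)" and p: "0 < \<rho> \<longrightarrow> f (\<rho>-1) = 4 \<and> g (\<rho>-1) = 0"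
  shows "(\<Sum>j<k. g j * 4^j) \<le> (\<Sum>j<k. f j * 4^j) + 1"
proof -
  consider "\<rho> = k" | "\<rho> = 0" "0 < k" | "0 < \<rho>" "\<rho> < k" using r by linarith
  then show ?thesis
  proof cases
    case 1
    have "(\<Sum>j<k. g j * 4^j) \<le> (\<Sum>j<k. f j * 4^j)"
    proof (rule sum_mono)
      fix j assume "j \<in> {..<k}"
      then have j: "j < k" by simp
      show "g j * 4^j \<le> f j * 4^j"
      proof (cases "Suc j = \<rho>")
        case True
        then have "j = \<rho> - 1" "0 < \<rho>" by auto
        then show ?thesis using p by simp
      next
        case False
        then show ?thesis using o j 1 by simp
      qed
    qed
    then show ?thesis by simp
  next
    case 2
    have A: "finite {..<k}" "(0::nat) \<in> {..<k}" using 2 by auto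
    have e: "(\<Sum>j\<in>{..<k} - {0}. g j * 4^j) = (\<Sum>j\<in>{..<k} - {0}. f j * 4^j)"
      using o 2 by (intro sum.cong) auto
    show ?thesis unfolding sum.remove[OF A, of "\<lambda>j. g j * 4^j"] sum.remove[OF A, of "\<lambda>j. f j * 4^j"] e
      using h 2 by simp
  next
    case 3
    define A where "A = {..<k}"
    have A1: "finite A" "\<rho> \<in> A" using 3 by (auto simp: A_def)
    have A2: "finite (A - {\<rho>})" "\<rho> - 1 \<in> A - {\<rho>}" using 3 by (auto simp: A_def)
    have e: "(\<Sum>j\<in>A - {\<rho>} - {\<rho>-1}. g j * 4^j) = (\<Sum>j\<in>A - {\<rho>} - {\<rho>-1}. f j * 4^j)"
    proof (intro sum.cong refl)
      fix j assume "j \<in> A - {\<rho>} - {\<rho>-1}"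
      then have "j < k" "j \<noteq> \<rho>" "Suc j \<noteq> \<rho>" unfolding A_def by auto
      then show "g j * 4^j = f j * 4^j" using o by simp
    qed
    have sg: "(\<Sum>j\<in>A. g j * 4^j) = g \<rho> * 4^\<rho> + (g (\<rho>-1) * 4^(\<rho>-1) + (\<Sum>j\<in>A - {\<rho>} - {\<rho>-1}. g j * 4^j))"
      using sum.remove[OF A1, of "\<lambda>j. g j * 4^j"] sum.remove[OF A2, of "\<lambda>j. g j * 4^j"] by simp
    have sf: "(\<Sum>j\<in>A. f j * 4^j) = f \<rho> * 4^\<rho> + (f (\<rho>-1) * 4^(\<rho>-1) + (\<Sum>j\<in>A - {\<rho>} - {\<rho>-1}. f j * 4^j))"
      using sum.remove[OF A1, of "\<lambda>j. f j * 4^j"] sum.remove[OF A2, of "\<lambda>j. f j * 4^j"] by simp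
    have pw: "(4::nat) * 4^(\<rho>-1) = 4^\<rho>" using 3
      by (metis Suc_diff_1 power_Suc)
    have "(\<Sum>j\<in>A. g j * 4^j) = (\<Sum>j\<in>A. f j * 4^j)"
      unfolding sg sf e using h p 3 pw by simp
    then show ?thesis unfolding A_def by simp
  qed
qed


definition cellOf :: "nat \<Rightarrow> nat \<Rightarrow> nat" where
  "cellOf L q = (if q < 4*L then q div 4 else q - 4*L)"
definition valOf :: "nat \<Rightarrow> nat \<Rightarrow> nat" where
  "valOf L q = (if q < 4*L then q mod 4 else 4)"

lemma stepA:
  assumes L: "3 \<le> L" and q: "q < 4*L+2" and D: "Dm L q 0 = Some q'"
  shows "q' < 4*L+2 \<and> cellOf L q' = (cellOf L q + 1) mod L \<and> valOf L q' = valOf L q"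
proof (cases "q < 4*L")
  case True
  then have q': "q' = 4 * ((q div 4 + 1) mod L) + q mod 4" using D Dm_a by simp
  have lt: "q' < 4*L" unfolding q' using L by (intro cell_lt) auto
  have "q' div 4 = (q div 4 + 1) mod L" "q' mod 4 = q mod 4" unfolding q' by auto
  then show ?thesis using lt True unfolding cellOf_def valOf_def by simp
next
  case False
  then have "q = 4*L \<or> q = 4*L+1" using q by auto
  then show ?thesis
  proof
    assume "q = 4*L"
    then show ?thesis using D L unfolding cellOf_def valOf_def by (simp add: Dm_def)
  next
    assume "q = 4*L+1"
    then show ?thesis using D unfolding Dm_def by simp
  qed
qed

lemma stepB:
  assumes L: "3 \<le> L" and q: "q < 4*L+2" and D: "Dm L q 1 = Some q'"
  shows "q' < 4*L+2 \<and> cellOf L q' = cellOf L q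
    \<and> (cellOf L q = 0 \<longrightarrow> valOf L q' = valOf L q + 1)
    \<and> (cellOf L q = 1 \<longrightarrow> valOf L q = 4 \<and> valOf L q' = 0)
    \<and> (2 \<le> cellOf L q \<longrightarrow> valOf L q' = valOf L q)"
proof -
  consider "q < 3" | "q = 3" | "3 < q" "q < 8" | "8 \<le> q" "q < 4*L" | "q = 4*L" | "q = 4*L+1"
    using q by linarith
  then show ?thesis
  proof cases
    case 1
    then have "q' = q + 1" using D by (simp add: Dm_def)
    then show ?thesis using 1 L unfolding cellOf_def valOf_def by auto
  next
    case 2
    then have "q' = 4*L" using D by (simp add: Dm_def)
    then show ?thesis using 2 L unfolding cellOf_def valOf_def by auto
  next
    case 3
    then show ?thesis using D by (simp add: Dm_def)
  next
    case 4
    then have "q' = q" using D by (simp add: Dm_def)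
    moreover have "2 \<le> q div 4" using 4 by auto
    ultimately show ?thesis using 4 unfolding cellOf_def valOf_def by auto
  next
    case 5
    then show ?thesis using D L by (simp add: Dm_def)
  next
    case 6
    then have "q' = 4" using D L by (simp add: Dm_def)
    then show ?thesis using 6 L unfolding cellOf_def valOf_def by auto
  qed
qed


definition cnta :: "nat list \<Rightarrow> nat" where "cnta w = length (filter (\<lambda>x. x = 0) w)"
definition cntb :: "nat list \<Rightarrow> nat" where "cntb w = length (filter (\<lambda>x. x \<noteq> 0) w)"
definition Vp :: "nat \<Rightarrow> nat \<Rightarrow> (nat \<Rightarrow> nat) \<Rightarrow> nat" where
  "Vp L k s = (\<Sum>j<k. valOf L (s j) * 4^j)"

lemma cnt_len: "length w = cnta w + cntb w"
  unfolding cnta_def cntb_def by (induction w) auto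

lemma cellmod:
  fixes r L j :: nat
  assumes "j < L"
  shows "(r + L - j) mod L = (if j \<le> r mod L then r mod L - j else r mod L + L - j)"
proof -
  have "(r + L - j) mod L = (r + (L - j)) mod L" using assms by simp
  also have "\<dots> = (r mod L + (L - j)) mod L" by (simp add: mod_add_left_eq)
  also have "\<dots> = (if j \<le> r mod L then r mod L - j else r mod L + L - j)"
  proof (cases "j \<le> r mod L")
    case True
    then have eq: "r mod L + (L - j) = (r mod L - j) + L" using assms by simp
    have lt: "r mod L - j < L" using assms by (simp add: less_imp_diff_less)
    have "(r mod L + (L - j)) mod L = ((r mod L - j) + L) mod L" by (simp only: eq)
    also have "\<dots> = r mod L - j" using lt by simp
    finally show ?thesis using True by simp
  next
    case False
    then have "r mod L + (L - j) < L" using assms by simp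
    then show ?thesis using False assms by simp
  qed
  finally show ?thesis .
qed

lemma LBi:
  assumes L: "L = k + 1" and k: "2 \<le> k"
  shows "(\<forall>j<k. s j < 4*L+2 \<and> cellOf L (s j) = (r + L - j) mod L) \<Longrightarrow>
    (\<forall>j<k. delta_word (Dm L) (s j) w = Some (t j)) \<Longrightarrow>
    (\<forall>j<k. t j < 4*L+2 \<and> cellOf L (t j) = (r + cnta w + L - j) mod L) \<and> Vp L k t \<le> Vp L k s + cntb w"
proof (induction w arbitrary: s r)
  case Nil
  then have "\<forall>j<k. t j = s j" by simp
  moreover then have "Vp L k t = Vp L k s" unfolding Vp_def by (intro sum.cong) auto
  ultimately show ?case using Nil.prems by (simp add: cnta_def cntb_def)
next
  case (Cons x w)
  have L3: "3 \<le> L" using L k by simp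
  define s' where "s' j = the (Dm L (s j) x)" for j
  have st: "Dm L (s j) x = Some (s' j) \<and> delta_word (Dm L) (s' j) w = Some (t j)" if "j < k" for j
  proof -
    have "delta_word (Dm L) (s j) (x # w) = Some (t j)" using Cons.prems(2) that by simp
    then obtain p where "Dm L (s j) x = Some p" "delta_word (Dm L) p w = Some (t j)"
      by (auto split: option.splits)
    then show ?thesis unfolding s'_def by simp
  qed
  have k0: "0 < k" using k by simp
  consider "x = 0" | "x = 1" | "2 \<le> x" by linarith
  then show ?case
  proof cases
    case 1
    have inv: "\<forall>j<k. s' j < 4*L+2 \<and> cellOf L (s' j) = (Suc r + L - j) mod L"
    proof (intro allI impI)
      fix j assume j: "j < k"
      have A: "s' j < 4*L+2 \<and> cellOf L (s' j) = (cellOf L (s j) + 1) mod L \<and> valOf L (s' j) = valOf L (s j)"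
        using stepA[OF L3, of "s j" "s' j"] st[OF j] Cons.prems(1) j 1 by simp
      have "(cellOf L (s j) + 1) mod L = ((r + L - j) mod L + 1) mod L" using Cons.prems(1) j by simp
      also have "\<dots> = Suc (r + L - j) mod L" by (simp add: mod_Suc_eq)
      also have "Suc (r + L - j) = Suc r + L - j" using j L by simp
      finally show "s' j < 4*L+2 \<and> cellOf L (s' j) = (Suc r + L - j) mod L" using A by simp
    qed
    have V: "Vp L k s' = Vp L k s" unfolding Vp_def
    proof (intro sum.cong refl)
      fix j assume "j \<in> {..<k}"
      then have j: "j < k" by simp
      have "valOf L (s' j) = valOf L (s j)"
        using stepA[OF L3, of "s j" "s' j"] st[OF j] Cons.prems(1) j 1 by simp
      then show "valOf L (s' j) * 4^j = valOf L (s j) * 4^j" by simp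
    qed
    have IH: "(\<forall>j<k. t j < 4*L+2 \<and> cellOf L (t j) = (Suc r + cnta w + L - j) mod L) \<and> Vp L k t \<le> Vp L k s' + cntb w"
      using Cons.IH[OF inv] st by blast
    then show ?thesis using 1 V by (simp add: cnta_def cntb_def)
  next
    case 2
    have B: "s' j < 4*L+2 \<and> cellOf L (s' j) = cellOf L (s j)
    \<and> (cellOf L (s j) = 0 \<longrightarrow> valOf L (s' j) = valOf L (s j) + 1)
    \<and> (cellOf L (s j) = 1 \<longrightarrow> valOf L (s j) = 4 \<and> valOf L (s' j) = 0)
    \<and> (2 \<le> cellOf L (s j) \<longrightarrow> valOf L (s' j) = valOf L (s j))" if j: "j < k" for j
      using stepB[OF L3, of "s j" "s' j"] st[OF j] Cons.prems(1) j 2 by simp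
    have inv: "\<forall>j<k. s' j < 4*L+2 \<and> cellOf L (s' j) = (r + L - j) mod L"
      using B Cons.prems(1) by simp
    define \<rho> where "\<rho> = r mod L"
    have \<rho>L: "\<rho> < L" unfolding \<rho>_def using L by simp
    have cell: "cellOf L (s j) = (if j \<le> \<rho> then \<rho> - j else \<rho> + L - j)" if "j < k" for j
      using Cons.prems(1) that cellmod[of j L r] L unfolding \<rho>_def by simp
    have V: "Vp L k s' \<le> Vp L k s + 1" unfolding Vp_def
    proof (rule key_sum[where \<rho>=\<rho>])
      show "\<rho> \<le> k" using \<rho>L L by simp
      show "\<forall>j<k. j \<noteq> \<rho> \<and> Suc j \<noteq> \<rho> \<longrightarrow> valOf L (s' j) = valOf L (s j)"
      proof (intro allI impI)
        fix j assume j: "j < k" and ne: "j \<noteq> \<rho> \<and> Suc j \<noteq> \<rho>"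
        have "2 \<le> cellOf L (s j)" using cell[OF j] ne j L by auto
        then show "valOf L (s' j) = valOf L (s j)" using B[OF j] by simp
      qed
      show "\<rho> < k \<longrightarrow> valOf L (s' \<rho>) = Suc (valOf L (s \<rho>))"
      proof
        assume r: "\<rho> < k"
        have "cellOf L (s \<rho>) = 0" using cell[OF r] by simp
        then show "valOf L (s' \<rho>) = Suc (valOf L (s \<rho>))" using B[OF r] by simp
      qed
      show "0 < \<rho> \<longrightarrow> valOf L (s (\<rho> - 1)) = 4 \<and> valOf L (s' (\<rho> - 1)) = 0"
      proof
        assume r: "0 < \<rho>"
        have j: "\<rho> - 1 < k" using r \<rho>L L by simp
        have "cellOf L (s (\<rho> - 1)) = 1" using cell[OF j] r by simp
        then show "valOf L (s (\<rho> - 1)) = 4 \<and> valOf L (s' (\<rho> - 1)) = 0" using B[OF j] by simp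
      qed
    qed
    have IH: "(\<forall>j<k. t j < 4*L+2 \<and> cellOf L (t j) = (r + cnta w + L - j) mod L) \<and> Vp L k t \<le> Vp L k s' + cntb w"
      using Cons.IH[OF inv] st by blast
    then show ?thesis using 2 V by (simp add: cnta_def cntb_def)
  next
    case 3
    have "Dm L (s 0) x = None" using 3 by (simp add: Dm_def)
    then show ?thesis using st[OF k0] by simp
  qed
qed




lemma cell_lt0: "0 < L \<Longrightarrow> 4 * (c mod L) < 4 * (L::nat)"
  using cell_lt[of 0 L c] by simp

lemma Dm_out: "Dm L q x = Some p \<Longrightarrow> 0 < L \<Longrightarrow> q < 4*L+2 \<and> x < 2 \<and> p < 4*L+2"
proof -
  assume D: "Dm L q x = Some p" and L: "0 < L"
  consider "x = 0" | "x = 1" | "2 \<le> x" by linarith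
  then show ?thesis
  proof cases
    case 1
    show ?thesis
    proof (cases "q < 4*L")
      case True
      then have "p = 4 * ((q div 4 + 1) mod L) + q mod 4" using D 1 by (simp add: Dm_def)
      moreover have "4 * ((q div 4 + 1) mod L) + q mod 4 < 4*L" using L by (intro cell_lt) auto
      ultimately show ?thesis using True 1 by simp
    next
      case False
      then show ?thesis using D 1 by (simp add: Dm_def split: if_splits)
    qed
  next
    case 2
    then show ?thesis using D L by (auto simp: Dm_def split: if_splits)
  next
    case 3
    then show ?thesis using D by (simp add: Dm_def)
  qed
qed

lemma Dm_wf: "0 < L \<Longrightarrow> 4*L+2 \<le> n \<Longrightarrow> wf_pdfa n 2 (Dm L)"
  unfolding wf_pdfa_def
proof (intro allI conjI impI)
  fix q a p :: nat assume L: "0 < L" and n: "4*L+2 \<le> n" and "Dm L q a = Some p"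
  then show "p < n" using Dm_out[of L q a p] by simp
next
  fix q a :: nat assume L: "0 < L" and n: "4*L+2 \<le> n" and na: "\<not> (q < n \<and> a < 2)"
  show "Dm L q a = None"
  proof (rule ccontr)
    assume "Dm L q a \<noteq> None"
    then obtain p where "Dm L q a = Some p" by auto
    then show False using Dm_out[of L q a p] L n na by simp
  qed
qed

lemma set_ba: "set (ba t) \<subseteq> {0,1}" unfolding ba_def by (induction t) auto

lemma set_Fw: "set (Fw L i) \<subseteq> {0,1}"
proof (induction i)
  case 0 then show ?case by simp
next
  case (Suc i)
  have "set (Gw L i) \<subseteq> {0,1}" unfolding Gw_def using set_ba by auto
  then show ?case using Suc by auto
qed

lemma geom3: "(\<Sum>j<k. 3 * (4::nat)^j) + 1 = 4^k"
  by (induction k) auto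

lemma main_case:
  assumes k: "2 \<le> k" and n: "n = 5*k+4"
  shows "4^k \<le> max_diam n 2"
proof -
  define L where "L = k + 1"
  have L3: "3 \<le> L" "0 < L" using k L_def by auto
  have nL: "4*L+2 \<le> n" using n k L_def by simp
  have wf: "wf_pdfa n 2 (Dm L)" using Dm_wf[OF L3(2) nL] .
  define W where "W = Fw L k @ [0]"
  have Ww: "W \<in> words 2" unfolding W_def words_def using set_Fw[of L k] by auto
  define s where "s j = 4*((L-j) mod L)" for j
  define t where "t j = 4*(((L-j) mod L + 1) mod L) + 3" for j
  have sW: "delta_word (Dm L) (s j) W = Some (t j)" if j: "j < k" for j
  proof -
    have "\<forall>j<k. delta_word (Dm L) (tok L (\<lambda>_. 0) j) (Fw L k) = Some (tok L (\<lambda>j. if j < k then 3 else 0) j)"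
      by (rule F_conf[OF L_def]) auto
    then have 1: "delta_word (Dm L) (s j) (Fw L k) = Some (4*((L-j) mod L) + 3)"
      using j unfolding tok_def s_def by simp
    have lt: "4*((L-j) mod L) + 3 < 4*L" using L3 by (intro cell_lt) auto
    have 2: "Dm L (4*((L-j) mod L) + 3) 0 = Some (t j)"
      unfolding t_def using Dm_a[OF lt] by simp
    show ?thesis unfolding W_def using dw_app[OF 1] 2 by simp
  qed
  show ?thesis
  proof (rule framework[OF wf Ww])
    fix w assume w: "w \<in> words 2" and ex: "expressed n (Dm L) w = expressed n (Dm L) W"
    have sw: "delta_word (Dm L) (s j) w = Some (t j)" if j: "j < k" for j
    proof -
      have "s j < 4*L" unfolding s_def using L3 by (intro cell_lt0) auto
      then have "s j < n" using nL by simp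
      then have "delta_word (Dm L) (s j) w = delta_word (Dm L) (s j) W"
        using fun_cong[OF ex, of "s j"] unfolding expressed_def by simp
      then show ?thesis using sW[OF j] by simp
    qed
    have inv: "\<forall>j<k. s j < 4*L+2 \<and> cellOf L (s j) = (0 + L - j) mod L"
    proof (intro allI impI)
      fix j assume j: "j < k"
      have "s j < 4*L" unfolding s_def using L3 by (intro cell_lt0) auto
      then show "s j < 4*L+2 \<and> cellOf L (s j) = (0 + L - j) mod L"
        unfolding cellOf_def by (simp add: s_def)
    qed
    have R: "(\<forall>j<k. t j < 4*L+2 \<and> cellOf L (t j) = (0 + cnta w + L - j) mod L) \<and> Vp L k t \<le> Vp L k s + cntb w"
      using LBi[OF L_def k inv] sw by blast
    have k0: "0 < k" using k by simp
    have t0: "t 0 = 7" unfolding t_def using L3 by simp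
    have "cellOf L (t 0) = 1" unfolding t0 cellOf_def using L3 by simp
    then have "(cnta w + L) mod L = 1" using R k0 by auto
    then have "cnta w mod L = 1" by simp
    then have ca: "1 \<le> cnta w" by (cases "cnta w") auto
    have vt: "valOf L (t j) = 3" for j
    proof -
      have "t j < 4*L" unfolding t_def using L3 by (intro cell_lt) auto
      then show ?thesis unfolding valOf_def by (simp add: t_def)
    qed
    have vs: "valOf L (s j) = 0" for j
    proof -
      have "s j < 4*L" unfolding s_def using L3 by (intro cell_lt0) auto
      then show ?thesis unfolding valOf_def by (simp add: s_def)
    qed
    have "Vp L k t = (\<Sum>j<k. 3 * 4^j)" unfolding Vp_def vt by simp
    moreover have "Vp L k s = 0" unfolding Vp_def vs by simp
    ultimately have "(\<Sum>j<k. 3 * (4::nat)^j) \<le> cntb w" using R by simp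
    then have "4^k \<le> cnta w + cntb w" using geom3[of k] ca by linarith
    then show "4^k \<le> length w" using cnt_len[of w] by simp
  qed
qed

definition Ch :: "nat \<Rightarrow> nat \<Rightarrow> nat option" where
  "Ch q x = (if x = 0 \<and> q < 8 then Some (q+1) else None)"

lemma Ch_simp: "Ch q x = (if x = 0 \<and> q < 8 then Some (q+1) else None)"
  by (simp add: Ch_def)

lemma Ch_dw: "delta_word Ch q w = Some p \<Longrightarrow> p = q + length w"
proof (induction w arbitrary: q)
  case Nil then show ?case by simp
next
  case (Cons x w)
  show ?case
  proof (cases "x = 0 \<and> q < 8")
    case True
    then have c: "Ch q x = Some (Suc q)" by (simp only: Ch_simp) simp
    have "delta_word Ch (Suc q) w = Some p" using Cons.prems by (simp only: delta_word.simps c option.case)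
    then show ?thesis using Cons.IH[of "Suc q"] by simp
  next
    case False
    then have c: "Ch q x = None" by (simp only: Ch_simp) simp
    have False using Cons.prems by (simp only: delta_word.simps c option.case) simp
    then show ?thesis ..
  qed
qed

lemma small_case: "4 \<le> max_diam 9 2"
proof -
  have wf: "wf_pdfa 9 2 Ch" unfolding wf_pdfa_def Ch_def by auto
  have Ww: "[0,0,0,0] \<in> words 2" unfolding words_def by auto
  show ?thesis
  proof (rule framework[OF wf Ww])
    fix w assume "w \<in> words 2" and ex: "expressed 9 Ch w = expressed 9 Ch [0,0,0,0]"
    have "delta_word Ch 0 w = delta_word Ch 0 [0,0,0,0]"
      using fun_cong[OF ex, of 0] unfolding expressed_def by simp
    also have "\<dots> = Some 4" by (simp add: Ch_def)
    finally have "4 = 0 + length w" by (rule Ch_dw)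
    then show "4 \<le> length w" by simp
  qed
qed

theorem corollary1:
  fixes n k :: nat
  assumes "n \<ge> 9" and "0 < k" and "n = 5 * k + 4"
  shows "real (max_diam n 2) \<ge> 4 powr ((real n - 4) / 5)"
proof -
  have e: "(real n - 4) / 5 = real k" using assms(3) by simp
  have p: "(4::real) powr real k = 4^k" by (simp add: powr_realpow)
  have "4^k \<le> max_diam n 2"
  proof (cases "k = 1")
    case True
    then show ?thesis using small_case assms(3) by simp
  next
    case False
    then show ?thesis using main_case[of k n] assms by simp
  qed
  then have "real (4^k) \<le> real (max_diam n 2)" by (simp only: of_nat_le_iff)
  then show ?thesis unfolding e p by simp
qed



end
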